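(* Let $G$ be a finite group, $N$ a normal subgroup, and $\mathcal O$ an $N_\infty$ operad for $G$. Then (i) the levelwise fixed points $\mathcal O^N$ (with $(\mathcal O^N)_n=\mathcal O_n^{N\times\{1\}}$) form an $N_\infty$ $G/N$-operad, and (ii) for $N\le H\le G$, a finite $H/N$-set is admissible for $\mathcal O^N$ if and only if it is admissible for $\mathcal O$ when regarded as an $H$-set via $H\to H/N$.
   Context: For a group $\Pi$, a $\Pi$-operad consists of $\Pi\times\Sigma_n$-spaces $\mathcal O_n$, a $\Pi$-fixed identity in $\mathcal O_1$ and $\Pi$-equivariant composition maps satisfying the usual operad axioms. A universal space for a family $\mathcal F$ of subgroups (closed under subgroups and conjugation) is a space whose $\Gamma$-fixed points are contractible for $\Gamma\in\mathcal F$ and empty otherwise. An $N_\infty$ $\Pi$-operad is a $\Pi$-operad with $\mathcal O_0$ $\Pi$-contractible, $\Sigma_n$ acting freely on $\mathcal O_n$, and $\mathcal O_n$ a universal space for a family of subgroups of $\Pi\times\Sigma_n$ containing all $L\times\{1\}$. For $L\le\Pi$ and a finite $L$-set $T$, $|T|=n$, let $\Gamma_T\le\Pi\times\Sigma_n$ be the graph of a homomorphism $L\to\Sigma_n$ encoding $T$; $T$ is admissible for $\mathcal O$ if $\mathcal O_n^{\Gamma_T}\neq\emptyset$. *)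

theory Defs
  imports "HOL-Analysis.Analysis" "HOL-Algebra.Sym_Groups" "HOL-Algebra.Coset"
begin

text \<open>
  The symmetric group Sigma_n is the library's sym_group n (permutations of
  {1..n}).  A Pi-operad has levels O_n, all modelled as topologies on one carrier type 'x,
  a left action of Pi x Sigma_n on O_n (act n (g, sigma)), an identity element
  and composition maps
     comp k j : O_k x O_{j 1} x ... x O_{j k} -> O_{j 1 + ... + j k},
  where the second argument is an (extensional) tuple indexed by {1..k}.
  Inputs of an n-ary operation are numbered 1..n; in a composite, the inputs of the
  i-th plugged operation occupy the block of positions J i + 1, ..., J i + j i,
  where J i = j 1 + ... + j (i-1).  Sigma_n acts on the left by relabelling inputs.
\<close>

record ('g, 'x) operad =
  lev  :: "nat \<Rightarrow> 'x topology"
  act  :: "nat \<Rightarrow> 'g \<times> (nat \<Rightarrow> nat) \<Rightarrow> 'x \<Rightarrow> 'x"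
  oid  :: "'x"
  comp :: "nat \<Rightarrow> (nat \<Rightarrow> nat) \<Rightarrow> 'x \<times> (nat \<Rightarrow> 'x) \<Rightarrow> 'x"

definition space_action :: "('g, 'm) monoid_scheme \<Rightarrow> 'x topology \<Rightarrow> ('g \<Rightarrow> 'x \<Rightarrow> 'x) \<Rightarrow> bool" where
  "space_action G X a \<longleftrightarrow>
     (\<forall>g\<in>carrier G. continuous_map X X (a g)) \<and>
     (\<forall>x\<in>topspace X. a \<one>\<^bsub>G\<^esub> x = x) \<and>
     (\<forall>g\<in>carrier G. \<forall>h\<in>carrier G. \<forall>x\<in>topspace X. a (g \<otimes>\<^bsub>G\<^esub> h) x = a g (a h x))"

definition set_action :: "('g, 'm) monoid_scheme \<Rightarrow> 't set \<Rightarrow> ('g \<Rightarrow> 't \<Rightarrow> 't) \<Rightarrow> bool" where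
  "set_action G T a \<longleftrightarrow>
     (\<forall>g\<in>carrier G. \<forall>t\<in>T. a g t \<in> T) \<and>
     (\<forall>t\<in>T. a \<one>\<^bsub>G\<^esub> t = t) \<and>
     (\<forall>g\<in>carrier G. \<forall>h\<in>carrier G. \<forall>t\<in>T. a (g \<otimes>\<^bsub>G\<^esub> h) t = a g (a h t))"

definition fixed_points :: "'x topology \<Rightarrow> ('h \<Rightarrow> 'x \<Rightarrow> 'x) \<Rightarrow> 'h set \<Rightarrow> 'x set" where
  "fixed_points X a K = {x \<in> topspace X. \<forall>k\<in>K. a k x = x}"

definition contractible_nonempty :: "'x topology \<Rightarrow> bool" where
  "contractible_nonempty X \<longleftrightarrow> topspace X \<noteq> {} \<and> contractible_space X"

definition equiv_contractible :: "('g, 'm) monoid_scheme \<Rightarrow> 'x topology \<Rightarrow> ('g \<Rightarrow> 'x \<Rightarrow> 'x) \<Rightarrow> bool" where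
  "equiv_contractible G X a \<longleftrightarrow>
     (\<exists>x0\<in>topspace X. (\<forall>g\<in>carrier G. a g x0 = x0) \<and>
        homotopic_with (\<lambda>f. \<forall>g\<in>carrier G. \<forall>x\<in>topspace X. f (a g x) = a g (f x))
          X X id (\<lambda>x. x0))"

definition blk :: "(nat \<Rightarrow> nat) \<Rightarrow> nat \<Rightarrow> nat" where
  "blk j i = (\<Sum>i'\<in>{1..<i}. j i')"

definition Pi_operad :: "('g, 'm) monoid_scheme \<Rightarrow> ('g, 'x, 'r) operad_scheme \<Rightarrow> bool" where
  "Pi_operad P Op \<longleftrightarrow>
   group P \<and>
   (\<forall>n. space_action (P \<times>\<times> sym_group n) (lev Op n) (act Op n)) \<and>
   oid Op \<in> topspace (lev Op 1) \<and>
   (\<forall>g\<in>carrier P. act Op 1 (g, id) (oid Op) = oid Op) \<and>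
   \<comment> \<open>continuity of composition (which includes mapping into the right level)\<close>
   (\<forall>k j. continuous_map
            (prod_topology (lev Op k) (product_topology (\<lambda>i. lev Op (j i)) {1..k}))
            (lev Op (\<Sum>i\<in>{1..k}. j i)) (comp Op k j)) \<and>
   \<comment> \<open>unit axioms\<close>
   (\<forall>n. \<forall>x\<in>topspace (lev Op n).
        comp Op 1 (\<lambda>_. n) (oid Op, restrict (\<lambda>_. x) {1}) = x \<and>
        comp Op n (\<lambda>_. 1) (x, restrict (\<lambda>_. oid Op) {1..n}) = x) \<and>
   \<comment> \<open>associativity\<close>
   (\<forall>k j h c d e.
      c \<in> topspace (lev Op k) \<longrightarrow>
      d \<in> (\<Pi>\<^sub>E i\<in>{1..k}. topspace (lev Op (j i))) \<longrightarrow>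
      e \<in> (\<Pi>\<^sub>E t\<in>{1..(\<Sum>i\<in>{1..k}. j i)}. topspace (lev Op (h t))) \<longrightarrow>
      comp Op (\<Sum>i\<in>{1..k}. j i) h (comp Op k j (c, d), e) =
      comp Op k (\<lambda>i. \<Sum>l\<in>{1..j i}. h (blk j i + l))
        (c, restrict (\<lambda>i. comp Op (j i) (\<lambda>l. h (blk j i + l))
                           (d i, restrict (\<lambda>l. e (blk j i + l)) {1..j i})) {1..k})) \<and>
   \<comment> \<open>Pi-equivariance\<close>
   (\<forall>k j g c d. g \<in> carrier P \<longrightarrow>
      c \<in> topspace (lev Op k) \<longrightarrow>
      d \<in> (\<Pi>\<^sub>E i\<in>{1..k}. topspace (lev Op (j i))) \<longrightarrow>
      comp Op k j (act Op k (g, id) c, restrict (\<lambda>i. act Op (j i) (g, id) (d i)) {1..k}) =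
      act Op (\<Sum>i\<in>{1..k}. j i) (g, id) (comp Op k j (c, d))) \<and>
   \<comment> \<open>Sigma-equivariance, top permutation (block permutation)\<close>
   (\<forall>k j \<sigma> \<beta> c d. \<sigma> \<in> carrier (sym_group k) \<longrightarrow>
      \<beta> \<in> carrier (sym_group (\<Sum>i\<in>{1..k}. j i)) \<longrightarrow>
      (\<forall>i\<in>{1..k}. \<forall>l\<in>{1..j (\<sigma> i)}. \<beta> (blk (j \<circ> \<sigma>) i + l) = blk j (\<sigma> i) + l) \<longrightarrow>
      c \<in> topspace (lev Op k) \<longrightarrow>
      d \<in> (\<Pi>\<^sub>E i\<in>{1..k}. topspace (lev Op (j i))) \<longrightarrow>
      comp Op k j (act Op k (\<one>\<^bsub>P\<^esub>, \<sigma>) c, d) =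
      act Op (\<Sum>i\<in>{1..k}. j i) (\<one>\<^bsub>P\<^esub>, \<beta>) (comp Op k (j \<circ> \<sigma>) (c, restrict (d \<circ> \<sigma>) {1..k}))) \<and>
   \<comment> \<open>Sigma-equivariance, bottom permutations (block sum)\<close>
   (\<forall>k j \<tau> \<rho> c d. (\<forall>i\<in>{1..k}. \<tau> i \<in> carrier (sym_group (j i))) \<longrightarrow>
      \<rho> \<in> carrier (sym_group (\<Sum>i\<in>{1..k}. j i)) \<longrightarrow>
      (\<forall>i\<in>{1..k}. \<forall>l\<in>{1..j i}. \<rho> (blk j i + l) = blk j i + \<tau> i l) \<longrightarrow>
      c \<in> topspace (lev Op k) \<longrightarrow>
      d \<in> (\<Pi>\<^sub>E i\<in>{1..k}. topspace (lev Op (j i))) \<longrightarrow>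
      comp Op k j (c, restrict (\<lambda>i. act Op (j i) (\<one>\<^bsub>P\<^esub>, \<tau> i) (d i)) {1..k}) =
      act Op (\<Sum>i\<in>{1..k}. j i) (\<one>\<^bsub>P\<^esub>, \<rho>) (comp Op k j (c, d)))"

definition subgroup_family :: "('g \<times> (nat \<Rightarrow> nat)) monoid \<Rightarrow> ('g \<times> (nat \<Rightarrow> nat)) set set \<Rightarrow> bool" where
  "subgroup_family Q F \<longleftrightarrow>
     (\<forall>\<Gamma>\<in>F. subgroup \<Gamma> Q) \<and>
     (\<forall>\<Gamma>\<in>F. \<forall>\<Gamma>'. subgroup \<Gamma>' Q \<longrightarrow> \<Gamma>' \<subseteq> \<Gamma> \<longrightarrow> \<Gamma>' \<in> F) \<and>
     (\<forall>\<Gamma>\<in>F. \<forall>q\<in>carrier Q. (\<lambda>y. q \<otimes>\<^bsub>Q\<^esub> y \<otimes>\<^bsub>Q\<^esub> inv\<^bsub>Q\<^esub> q) ` \<Gamma> \<in> F)"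

definition universal_space :: "('h, 'm) monoid_scheme \<Rightarrow> 'h set set \<Rightarrow> 'x topology \<Rightarrow> ('h \<Rightarrow> 'x \<Rightarrow> 'x) \<Rightarrow> bool" where
  "universal_space Q F X a \<longleftrightarrow>
     (\<forall>\<Gamma>. subgroup \<Gamma> Q \<longrightarrow>
        (\<Gamma> \<in> F \<longrightarrow> contractible_nonempty (subtopology X (fixed_points X a \<Gamma>))) \<and>
        (\<Gamma> \<notin> F \<longrightarrow> fixed_points X a \<Gamma> = {}))"

definition N_infty_operad :: "('g, 'm) monoid_scheme \<Rightarrow> ('g, 'x, 'r) operad_scheme \<Rightarrow> bool" where
  "N_infty_operad P Op \<longleftrightarrow>
     Pi_operad P Op \<and>
     equiv_contractible P (lev Op 0) (\<lambda>g. act Op 0 (g, id)) \<and>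
     (\<forall>n. \<forall>\<sigma>\<in>carrier (sym_group n). \<forall>x\<in>topspace (lev Op n).
          act Op n (\<one>\<^bsub>P\<^esub>, \<sigma>) x = x \<longrightarrow> \<sigma> = id) \<and>
     (\<forall>n. \<exists>F. subgroup_family (P \<times>\<times> sym_group n) F \<and>
          (\<forall>L. subgroup L P \<longrightarrow> L \<times> {id} \<in> F) \<and>
          universal_space (P \<times>\<times> sym_group n) F (lev Op n) (act Op n))"

text \<open>Admissibility: a finite L-set T (L \<le> Pi) with |T| = n is admissible if the graph
  Gamma_T of the homomorphism L \<rightarrow> Sigma_n encoding T (via some numbering
  e : T \<rightarrow> {1..n}) has nonempty fixed points in O_n.\<close>
definition graph_of_Lset :: "'g set \<Rightarrow> 't set \<Rightarrow> ('g \<Rightarrow> 't \<Rightarrow> 't) \<Rightarrow> ('t \<Rightarrow> nat) \<Rightarrow> ('g \<times> (nat \<Rightarrow> nat)) set" where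
  "graph_of_Lset L T a e =
     {(l, \<lambda>m. if m \<in> {1..card T} then e (a l (inv_into T e m)) else m) | l. l \<in> L}"

definition admissible :: "('g, 'm) monoid_scheme \<Rightarrow> ('g, 'x, 'r) operad_scheme \<Rightarrow> 'g set \<Rightarrow> 't set \<Rightarrow> ('g \<Rightarrow> 't \<Rightarrow> 't) \<Rightarrow> bool" where
  "admissible P Op L T a \<longleftrightarrow>
     (\<exists>e. bij_betw e T {1..card T} \<and>
        fixed_points (lev Op (card T)) (act Op (card T)) (graph_of_Lset L T a e) \<noteq> {})"

text \<open>The levelwise N-fixed point operad, a G/N-operad; a coset acts through any representative.\<close>
definition fixed_operad :: "('g, 'm) monoid_scheme \<Rightarrow> 'g set \<Rightarrow> ('g, 'x, 'r) operad_scheme \<Rightarrow> ('g set, 'x) operad" where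
  "fixed_operad G N Op =
     \<lparr> lev = (\<lambda>n. subtopology (lev Op n) (fixed_points (lev Op n) (act Op n) (N \<times> {id}))),
       act = (\<lambda>n (C, \<sigma>) x. act Op n (SOME g. g \<in> C, \<sigma>) x),
       oid = oid Op,
       comp = comp Op \<rparr>"

end

theory Submission imports Defs begin

lemma sa_parts:
  assumes "space_action (G \<times>\<times> sym_group n) X a"
  shows "\<And>g \<sigma>. g \<in> carrier G \<Longrightarrow> \<sigma> \<in> carrier (sym_group n) \<Longrightarrow> continuous_map X X (a (g,\<sigma>))"
    and "\<And>x. x \<in> topspace X \<Longrightarrow> a (\<one>\<^bsub>G\<^esub>, id) x = x"
    and "\<And>g \<sigma> h \<tau> x. g \<in> carrier G \<Longrightarrow> \<sigma> \<in> carrier (sym_group n) \<Longrightarrow> h \<in> carrier G \<Longrightarrow> \<tau> \<in> carrier (sym_group n)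
          \<Longrightarrow> x \<in> topspace X \<Longrightarrow> a (g \<otimes>\<^bsub>G\<^esub> h, \<sigma> \<circ> \<tau>) x = a (g,\<sigma>) (a (h,\<tau>) x)"
  using assms unfolding space_action_def
  by (auto simp: sym_group_one sym_group_mult)

lemma vimage_subgroup:
  assumes "group_hom G H h" "subgroup K H"
  shows "subgroup {x \<in> carrier G. h x \<in> K} G"
proof -
  interpret group_hom G H h by fact
  show ?thesis
  proof (rule G.subgroupI)
    show "{x \<in> carrier G. h x \<in> K} \<noteq> {}"
      using assms(2) subgroup.one_closed by fastforce
    show "\<And>a. a \<in> {x \<in> carrier G. h x \<in> K} \<Longrightarrow> inv\<^bsub>G\<^esub> a \<in> {x \<in> carrier G. h x \<in> K}"
      using assms(2) subgroup.m_inv_closed by fastforce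
    show "\<And>a b. a \<in> {x \<in> carrier G. h x \<in> K} \<Longrightarrow> b \<in> {x \<in> carrier G. h x \<in> K} \<Longrightarrow>
       a \<otimes>\<^bsub>G\<^esub> b \<in> {x \<in> carrier G. h x \<in> K}"
      using assms(2) subgroup.m_closed by fastforce
  qed auto
qed

lemma (in group) conj_cancel1:
  "a \<in> carrier G \<Longrightarrow> b \<in> carrier G \<Longrightarrow> a \<otimes> (inv a \<otimes> b \<otimes> a) \<otimes> inv a = b"
  by (simp add: m_assoc[symmetric], simp add: m_assoc)
lemma (in group) conj_cancel2:
  "a \<in> carrier G \<Longrightarrow> b \<in> carrier G \<Longrightarrow> inv a \<otimes> (a \<otimes> b \<otimes> inv a) \<otimes> a = b"
  by (simp add: m_assoc[symmetric], simp add: m_assoc)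

locale fxs = group G for G :: "('a, 'm) monoid_scheme" (structure) +
  fixes N :: "'a set" and Op :: "('a, 'x) operad"
  assumes nrm: "N \<lhd> G" and NI: "N_infty_operad G Op"
begin

definition Fix where "Fix n = fixed_points (lev Op n) (act Op n) (N \<times> {id})"
definition rep :: "'a set \<Rightarrow> 'a" where "rep C = (SOME g. g \<in> C)"
abbreviation "O' \<equiv> fixed_operad G N Op"

lemma PO: "Pi_operad G Op" using NI N_infty_operad_def by blast

lemmas POs = PO[unfolded Pi_operad_def]

lemma sa: "space_action (G \<times>\<times> sym_group n) (lev Op n) (act Op n)"
  using conjunct1[OF conjunct2[OF POs]] by (rule spec)

lemma Nsub: "N \<subseteq> carrier G" using nrm normal_imp_subgroup subgroup.subset by blast
lemma one_N: "\<one>\<^bsub>G\<^esub> \<in> N" using nrm normal_imp_subgroup subgroup.one_closed by blast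

lemma idS: "id \<in> carrier (sym_group n)"
  by (simp add: sym_group_carrier permutes_id)

lemma Fix_sub: "Fix n \<subseteq> topspace (lev Op n)"
  unfolding Fix_def fixed_points_def by auto

lemma lev_O': "lev O' n = subtopology (lev Op n) (Fix n)"
  by (simp add: fixed_operad_def Fix_def)
lemma top_O': "topspace (lev O' n) = Fix n"
  using Fix_sub by (auto simp: lev_O')
lemma act_O': "act O' n (C,\<sigma>) x = act Op n (rep C, \<sigma>) x"
  by (simp add: fixed_operad_def rep_def)
lemma oid_O': "oid O' = oid Op" by (simp add: fixed_operad_def)
lemma comp_O': "comp O' = comp Op" by (simp add: fixed_operad_def)

lemma FixI: "x \<in> topspace (lev Op n) \<Longrightarrow> (\<And>m. m \<in> N \<Longrightarrow> act Op n (m, id) x = x) \<Longrightarrow> x \<in> Fix n"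
  unfolding Fix_def fixed_points_def by auto
lemma FixD: "x \<in> Fix n \<Longrightarrow> m \<in> N \<Longrightarrow> act Op n (m, id) x = x"
  unfolding Fix_def fixed_points_def by auto

lemma act_top: "g \<in> carrier G \<Longrightarrow> \<sigma> \<in> carrier (sym_group n) \<Longrightarrow> x \<in> topspace (lev Op n)
   \<Longrightarrow> act Op n (g,\<sigma>) x \<in> topspace (lev Op n)"
  using sa_parts(1)[OF sa, of g \<sigma>] unfolding continuous_map_def by blast

lemma act_mult: "g \<in> carrier G \<Longrightarrow> \<sigma> \<in> carrier (sym_group n) \<Longrightarrow> h \<in> carrier G \<Longrightarrow> \<tau> \<in> carrier (sym_group n)
          \<Longrightarrow> x \<in> topspace (lev Op n) \<Longrightarrow> act Op n (g \<otimes>\<^bsub>G\<^esub> h, \<sigma> \<circ> \<tau>) x = act Op n (g,\<sigma>) (act Op n (h,\<tau>) x)"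
  using sa_parts(3)[OF sa] by blast

lemma act_one: "x \<in> topspace (lev Op n) \<Longrightarrow> act Op n (\<one>\<^bsub>G\<^esub>, id) x = x"
  using sa_parts(2)[OF sa] by blast

lemma Fix_closed:
  assumes x: "x \<in> Fix n" and g: "g \<in> carrier G" and s: "\<sigma> \<in> carrier (sym_group n)"
  shows "act Op n (g,\<sigma>) x \<in> Fix n"
proof (rule FixI)
  have xt: "x \<in> topspace (lev Op n)" using x Fix_sub by blast
  show "act Op n (g,\<sigma>) x \<in> topspace (lev Op n)" using act_top g s xt by blast
  fix m assume m: "m \<in> N"
  have mG: "m \<in> carrier G" using m Nsub by blast
  define m' where "m' = inv\<^bsub>G\<^esub> g \<otimes>\<^bsub>G\<^esub> m \<otimes>\<^bsub>G\<^esub> g"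
  have m'N: "m' \<in> N" unfolding m'_def using normal.inv_op_closed1[OF nrm g m] .
  have m'G: "m' \<in> carrier G" using m'N Nsub by blast
  have eq: "m \<otimes>\<^bsub>G\<^esub> g = g \<otimes>\<^bsub>G\<^esub> m'"
    unfolding m'_def using g mG
    by (simp add: m_assoc[symmetric])
  have "act Op n (m,id) (act Op n (g,\<sigma>) x) = act Op n (m \<otimes>\<^bsub>G\<^esub> g, id \<circ> \<sigma>) x"
    using act_mult[OF mG idS g s xt] by simp
  also have "\<dots> = act Op n (g \<otimes>\<^bsub>G\<^esub> m', \<sigma> \<circ> id) x" using eq by simp
  also have "\<dots> = act Op n (g,\<sigma>) (act Op n (m',id) x)"
    using act_mult[OF g s m'G idS xt] by simp
  also have "\<dots> = act Op n (g,\<sigma>) x" using FixD[OF x m'N] by simp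
  finally show "act Op n (m,id) (act Op n (g,\<sigma>) x) = act Op n (g,\<sigma>) x" .
qed


lemma Nsg: "subgroup N G" using nrm normal_imp_subgroup by blast

lemma rep_in: assumes "C \<in> carrier (G Mod N)"
  shows "rep C \<in> carrier G" "rep C \<in> C" "C = N #> rep C"
proof -
  obtain h where h: "h \<in> carrier G" "C = N #> h"
    using assms by (auto simp: FactGroup_def RCOSETS_def)
  have "h \<in> C" using h rcos_self Nsg by blast
  then show rc: "rep C \<in> C" unfolding rep_def by (rule someI)
  then show "rep C \<in> carrier G" using h r_coset_subset_G Nsub by blast
  show "C = N #> rep C" using repr_independence[of "rep C" N h] rc h Nsg by simp
qed

lemma key:
  assumes x: "x \<in> Fix n" and g: "g \<in> carrier G" and s: "\<sigma> \<in> carrier (sym_group n)" and g': "g' \<in> N #> g"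
  shows "act Op n (g',\<sigma>) x = act Op n (g,\<sigma>) x"
proof -
  obtain m where m: "m \<in> N" "g' = m \<otimes> g" using g' unfolding r_coset_def by auto
  have mG: "m \<in> carrier G" using m Nsub by blast
  have xt: "x \<in> topspace (lev Op n)" using x Fix_sub by blast
  have "act Op n (g',\<sigma>) x = act Op n (m \<otimes> g, id \<circ> \<sigma>) x" using m by simp
  also have "\<dots> = act Op n (m,id) (act Op n (g,\<sigma>) x)" using act_mult[OF mG idS g s xt] .
  also have "\<dots> = act Op n (g,\<sigma>) x" using FixD[OF Fix_closed[OF x g s] m(1)] .
  finally show ?thesis .
qed

lemma key':
  assumes x: "x \<in> Fix n" and g: "g \<in> carrier G" and s: "\<sigma> \<in> carrier (sym_group n)"
  shows "act O' n (N #> g,\<sigma>) x = act Op n (g,\<sigma>) x"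
proof -
  have "N #> g \<in> carrier (G Mod N)" using g Nsub by (simp add: FactGroup_def rcosetsI)
  then have "rep (N #> g) \<in> N #> g" by (rule rep_in)
  then show ?thesis unfolding act_O' using key[OF x g s] by blast
qed

lemma key_one:
  assumes x: "x \<in> Fix n" and s: "\<sigma> \<in> carrier (sym_group n)"
  shows "act O' n (N,\<sigma>) x = act Op n (\<one>,\<sigma>) x"
  using key'[OF x one_closed s] Nsub by simp

abbreviation Q where "Q n \<equiv> G \<times>\<times> sym_group n"
abbreviation Q' where "Q' n \<equiv> (G Mod N) \<times>\<times> sym_group n"
definition pi :: "'a \<times> (nat \<Rightarrow> nat) \<Rightarrow> 'a set \<times> (nat \<Rightarrow> nat)" where
  "pi q = (N #> fst q, snd q)"
definition pre where "pre n \<Gamma> = {q \<in> carrier (Q n). pi q \<in> \<Gamma>}"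

lemma grpQ: "group (Q n)" by (simp add: DirProd_group is_group sym_group_is_group)
lemma grpQ': "group (Q' n)"
  by (simp add: DirProd_group normal.factorgroup_is_group[OF nrm] sym_group_is_group)

lemma pi_hom: "group_hom (Q n) (Q' n) pi"
proof -
  have "pi \<in> hom (Q n) (Q' n)"
    unfolding hom_def
  proof (intro CollectI conjI ballI)
    show "pi \<in> carrier (Q n) \<rightarrow> carrier (Q' n)"
      using Nsub by (auto simp: pi_def FactGroup_def rcosetsI)
    fix x y assume xy: "x \<in> carrier (Q n)" "y \<in> carrier (Q n)"
    obtain a \<sigma> b \<tau> where ab: "x = (a,\<sigma>)" "y = (b,\<tau>)" by (cases x, cases y) blast
    have "a \<in> carrier G" "b \<in> carrier G" using xy ab by auto
    then show "pi (x \<otimes>\<^bsub>Q n\<^esub> y) = pi x \<otimes>\<^bsub>Q' n\<^esub> pi y"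
      unfolding ab by (simp add: pi_def normal.rcos_sum[OF nrm])
  qed
  then show ?thesis using grpQ grpQ' by (simp add: group_hom_def group_hom_axioms_def)
qed

lemma pi_surj: "q \<in> carrier (Q' n) \<Longrightarrow> \<exists>q'\<in>carrier (Q n). pi q' = q"
  apply (cases q)
  subgoal for C \<sigma>
    apply (rule bexI[of _ "(rep C, \<sigma>)"])
    using rep_in[of C] by (auto simp: pi_def)
  done

lemma act_pi: "x \<in> Fix n \<Longrightarrow> q \<in> carrier (Q n) \<Longrightarrow> act O' n (pi q) x = act Op n q x"
  by (cases q) (auto simp: pi_def key')

lemma pre_subgroup: "subgroup \<Gamma> (Q' n) \<Longrightarrow> subgroup (pre n \<Gamma>) (Q n)"
  unfolding pre_def by (rule vimage_subgroup[OF pi_hom])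

lemma img_pre: assumes "\<Gamma> \<subseteq> carrier (Q' n)" shows "pi ` pre n \<Gamma> = \<Gamma>"
proof
  show "pi ` pre n \<Gamma> \<subseteq> \<Gamma>" unfolding pre_def by blast
  show "\<Gamma> \<subseteq> pi ` pre n \<Gamma>"
  proof
    fix q assume q: "q \<in> \<Gamma>"
    then obtain q' where "q' \<in> carrier (Q n)" "pi q' = q" using pi_surj assms by blast
    then show "q \<in> pi ` pre n \<Gamma>" unfolding pre_def using q by blast
  qed
qed

lemma FP: assumes "subgroup \<Gamma> (Q' n)"
  shows "fixed_points (lev O' n) (act O' n) \<Gamma> = fixed_points (lev Op n) (act Op n) (pre n \<Gamma>)"
proof
  show "fixed_points (lev O' n) (act O' n) \<Gamma> \<subseteq> fixed_points (lev Op n) (act Op n) (pre n \<Gamma>)"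
  proof
    fix x assume "x \<in> fixed_points (lev O' n) (act O' n) \<Gamma>"
    then have x: "x \<in> Fix n" "\<And>q. q \<in> \<Gamma> \<Longrightarrow> act O' n q x = x"
      unfolding fixed_points_def top_O' by auto
    show "x \<in> fixed_points (lev Op n) (act Op n) (pre n \<Gamma>)"
      unfolding fixed_points_def pre_def
      using x Fix_sub act_pi by fastforce
  qed
  show "fixed_points (lev Op n) (act Op n) (pre n \<Gamma>) \<subseteq> fixed_points (lev O' n) (act O' n) \<Gamma>"
  proof
    fix x assume "x \<in> fixed_points (lev Op n) (act Op n) (pre n \<Gamma>)"
    then have x: "x \<in> topspace (lev Op n)" "\<And>q. q \<in> pre n \<Gamma> \<Longrightarrow> act Op n q x = x"
      unfolding fixed_points_def by auto
    have xF: "x \<in> Fix n"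
    proof (rule FixI[OF x(1)])
      fix m assume m: "m \<in> N"
      have "pi (m, id) = \<one>\<^bsub>Q' n\<^esub>"
        using m coset_join2[OF _ Nsg m] Nsub by (auto simp: pi_def sym_group_one)
      then have "(m,id) \<in> pre n \<Gamma>"
        using m Nsub idS subgroup.one_closed[OF assms] by (auto simp: pre_def)
      then show "act Op n (m, id) x = x" using x(2) by blast
    qed
    show "x \<in> fixed_points (lev O' n) (act O' n) \<Gamma>"
      unfolding fixed_points_def top_O'
    proof (intro CollectI conjI ballI xF)
      fix q assume q: "q \<in> \<Gamma>"
      then obtain q' where q': "q' \<in> carrier (Q n)" "pi q' = q"
        using pi_surj subgroup.subset[OF assms] by blast
      then have "q' \<in> pre n \<Gamma>" using q by (simp add: pre_def)
      then show "act O' n q x = x" using act_pi[OF xF q'(1)] q' x(2) by simp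
    qed
  qed
qed

lemma pre_conj:
  assumes q': "q' \<in> carrier (Q n)" and G: "\<Gamma> \<subseteq> carrier (Q' n)"
  shows "pre n ((\<lambda>y. pi q' \<otimes>\<^bsub>Q' n\<^esub> y \<otimes>\<^bsub>Q' n\<^esub> inv\<^bsub>Q' n\<^esub> pi q') ` \<Gamma>)
       = (\<lambda>y. q' \<otimes>\<^bsub>Q n\<^esub> y \<otimes>\<^bsub>Q n\<^esub> inv\<^bsub>Q n\<^esub> q') ` pre n \<Gamma>"
proof -
  interpret h: group_hom "Q n" "Q' n" pi by (rule pi_hom)
  show ?thesis
  proof
    show "(\<lambda>y. q' \<otimes>\<^bsub>Q n\<^esub> y \<otimes>\<^bsub>Q n\<^esub> inv\<^bsub>Q n\<^esub> q') ` pre n \<Gamma> \<subseteq> pre n ((\<lambda>y. pi q' \<otimes>\<^bsub>Q' n\<^esub> y \<otimes>\<^bsub>Q' n\<^esub> inv\<^bsub>Q' n\<^esub> pi q') ` \<Gamma>)"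
    proof (rule image_subsetI)
      fix y assume "y \<in> pre n \<Gamma>"
      then have yc: "y \<in> carrier (Q n)" "pi y \<in> \<Gamma>" unfolding pre_def by blast+
      have c: "q' \<otimes>\<^bsub>Q n\<^esub> y \<otimes>\<^bsub>Q n\<^esub> inv\<^bsub>Q n\<^esub> q' \<in> carrier (Q n)"
        using h.G.m_closed[OF h.G.m_closed[OF q' yc(1)] h.G.inv_closed[OF q']] .
      have "pi (q' \<otimes>\<^bsub>Q n\<^esub> y \<otimes>\<^bsub>Q n\<^esub> inv\<^bsub>Q n\<^esub> q') = pi q' \<otimes>\<^bsub>Q' n\<^esub> pi y \<otimes>\<^bsub>Q' n\<^esub> inv\<^bsub>Q' n\<^esub> pi q'"
        using h.hom_mult[OF h.G.m_closed[OF q' yc(1)] h.G.inv_closed[OF q']] h.hom_mult[OF q' yc(1)] h.hom_inv[OF q']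
        by simp
      then show "q' \<otimes>\<^bsub>Q n\<^esub> y \<otimes>\<^bsub>Q n\<^esub> inv\<^bsub>Q n\<^esub> q' \<in> pre n ((\<lambda>y. pi q' \<otimes>\<^bsub>Q' n\<^esub> y \<otimes>\<^bsub>Q' n\<^esub> inv\<^bsub>Q' n\<^esub> pi q') ` \<Gamma>)"
        unfolding pre_def using c yc(2) by blast
    qed
    show "pre n ((\<lambda>y. pi q' \<otimes>\<^bsub>Q' n\<^esub> y \<otimes>\<^bsub>Q' n\<^esub> inv\<^bsub>Q' n\<^esub> pi q') ` \<Gamma>) \<subseteq> (\<lambda>y. q' \<otimes>\<^bsub>Q n\<^esub> y \<otimes>\<^bsub>Q n\<^esub> inv\<^bsub>Q n\<^esub> q') ` pre n \<Gamma>"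
    proof
      fix z assume "z \<in> pre n ((\<lambda>y. pi q' \<otimes>\<^bsub>Q' n\<^esub> y \<otimes>\<^bsub>Q' n\<^esub> inv\<^bsub>Q' n\<^esub> pi q') ` \<Gamma>)"
      then obtain w where z: "z \<in> carrier (Q n)" "w \<in> \<Gamma>" "pi z = pi q' \<otimes>\<^bsub>Q' n\<^esub> w \<otimes>\<^bsub>Q' n\<^esub> inv\<^bsub>Q' n\<^esub> pi q'"
        unfolding pre_def by auto
      define y where "y = inv\<^bsub>Q n\<^esub> q' \<otimes>\<^bsub>Q n\<^esub> z \<otimes>\<^bsub>Q n\<^esub> q'"
      have yc: "y \<in> carrier (Q n)" unfolding y_def
        using h.G.m_closed[OF h.G.m_closed[OF h.G.inv_closed[OF q'] z(1)] q'] .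
      have wc: "w \<in> carrier (Q' n)" using z G by blast
      have "pi y = inv\<^bsub>Q' n\<^esub> pi q' \<otimes>\<^bsub>Q' n\<^esub> pi z \<otimes>\<^bsub>Q' n\<^esub> pi q'"
        unfolding y_def
        using h.hom_mult[OF h.G.m_closed[OF h.G.inv_closed[OF q'] z(1)] q'] h.hom_mult[OF h.G.inv_closed[OF q'] z(1)] h.hom_inv[OF q']
        by simp
      also have "\<dots> = w" unfolding z(3) using h.H.conj_cancel2[OF h.hom_closed[OF q'] wc] .
      finally have "y \<in> pre n \<Gamma>" using yc z by (simp add: pre_def)
      moreover have "z = q' \<otimes>\<^bsub>Q n\<^esub> y \<otimes>\<^bsub>Q n\<^esub> inv\<^bsub>Q n\<^esub> q'"
        unfolding y_def by (rule h.G.conj_cancel1[OF q' z(1), symmetric])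
      ultimately show "z \<in> (\<lambda>y. q' \<otimes>\<^bsub>Q n\<^esub> y \<otimes>\<^bsub>Q n\<^esub> inv\<^bsub>Q n\<^esub> q') ` pre n \<Gamma>" by blast
    qed
  qed
qed

lemma pre_L:
  assumes L: "subgroup L (G Mod N)"
  shows "pre n (L \<times> {id}) = \<Union>L \<times> {id}"
proof -
  have UL: "subgroup (\<Union>L) G" using normal.factgroup_subgroup_union_subgroup[OF nrm L] .
  have LC: "L \<subseteq> carrier (G Mod N)" using subgroup.subset[OF L] .
  show ?thesis
  proof safe
    fix g \<sigma> assume "(g,\<sigma>) \<in> pre n (L \<times> {id})"
    then have "g \<in> carrier G" "N #> g \<in> L" "\<sigma> = id" by (auto simp: pre_def pi_def)
    then show "g \<in> \<Union>L" "\<sigma> = id" using rcos_self[OF _ Nsg] by auto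
  next
    fix g C assume g: "g \<in> C" "C \<in> L"
    have gc: "g \<in> carrier G" using g subgroup.subset[OF UL] by blast
    have C: "C = N #> rep C" "rep C \<in> carrier G" using rep_in g LC by auto
    have "N #> g = C" using repr_independence[of g N "rep C"] C g Nsg by simp
    then show "(g, id) \<in> pre n (L \<times> {id})" using gc g idS by (auto simp: pre_def pi_def)
  qed
qed

lemma univ_part:
  "\<exists>F'. subgroup_family (Q' n) F' \<and> (\<forall>L. subgroup L (G Mod N) \<longrightarrow> L \<times> {id} \<in> F') \<and>
     universal_space (Q' n) F' (lev O' n) (act O' n)"
proof -
  obtain F where F: "subgroup_family (Q n) F" "\<And>L. subgroup L G \<Longrightarrow> L \<times> {id} \<in> F"
    "universal_space (Q n) F (lev Op n) (act Op n)"
    using NI unfolding N_infty_operad_def by blast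
  have Fs: "\<And>\<Gamma>. \<Gamma> \<in> F \<Longrightarrow> subgroup \<Gamma> (Q n)" using F(1) unfolding subgroup_family_def by blast
  have Fsub: "\<And>\<Gamma> \<Gamma>'. \<Gamma> \<in> F \<Longrightarrow> subgroup \<Gamma>' (Q n) \<Longrightarrow> \<Gamma>' \<subseteq> \<Gamma> \<Longrightarrow> \<Gamma>' \<in> F"
    using F(1) unfolding subgroup_family_def by blast
  have Fconj: "\<And>\<Gamma> q. \<Gamma> \<in> F \<Longrightarrow> q \<in> carrier (Q n) \<Longrightarrow> (\<lambda>y. q \<otimes>\<^bsub>Q n\<^esub> y \<otimes>\<^bsub>Q n\<^esub> inv\<^bsub>Q n\<^esub> q) ` \<Gamma> \<in> F"
    using F(1) unfolding subgroup_family_def by blast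
  interpret h: group_hom "Q n" "Q' n" pi by (rule pi_hom)
  define F' where "F' = {\<Gamma>. \<Gamma> \<subseteq> carrier (Q' n) \<and> pre n \<Gamma> \<in> F}"
  have F'sg: "subgroup \<Gamma> (Q' n)" if "\<Gamma> \<in> F'" for \<Gamma>
  proof -
    have "subgroup (pi ` pre n \<Gamma>) (Q' n)" using h.subgroup_img_is_subgroup Fs that F'_def by blast
    then show ?thesis using img_pre that F'_def by simp
  qed
  have "subgroup_family (Q' n) F'"
    unfolding subgroup_family_def
  proof (intro conjI ballI allI impI)
    show "\<And>\<Gamma>. \<Gamma> \<in> F' \<Longrightarrow> subgroup \<Gamma> (Q' n)" by (rule F'sg)
    fix \<Gamma> assume G: "\<Gamma> \<in> F'"
    {
      fix \<Gamma>' assume "subgroup \<Gamma>' (Q' n)" "\<Gamma>' \<subseteq> \<Gamma>"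
      moreover have "pre n \<Gamma>' \<subseteq> pre n \<Gamma>" using calculation(2) by (auto simp: pre_def)
      ultimately show "\<Gamma>' \<in> F'" using G Fsub pre_subgroup subgroup.subset unfolding F'_def by blast
    }
    fix q assume q: "q \<in> carrier (Q' n)"
    obtain q' where q': "q' \<in> carrier (Q n)" "pi q' = q" using pi_surj q by blast
    have Gs: "\<Gamma> \<subseteq> carrier (Q' n)" using G F'_def by blast
    have "pre n ((\<lambda>y. q \<otimes>\<^bsub>Q' n\<^esub> y \<otimes>\<^bsub>Q' n\<^esub> inv\<^bsub>Q' n\<^esub> q) ` \<Gamma>) \<in> F"
      using pre_conj[OF q'(1) Gs] q' Fconj G F'_def by auto
    moreover have "(\<lambda>y. q \<otimes>\<^bsub>Q' n\<^esub> y \<otimes>\<^bsub>Q' n\<^esub> inv\<^bsub>Q' n\<^esub> q) ` \<Gamma> \<subseteq> carrier (Q' n)"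
    proof (rule image_subsetI)
      fix y assume "y \<in> \<Gamma>"
      then have "y \<in> carrier (Q' n)" using Gs by blast
      then show "q \<otimes>\<^bsub>Q' n\<^esub> y \<otimes>\<^bsub>Q' n\<^esub> inv\<^bsub>Q' n\<^esub> q \<in> carrier (Q' n)"
        using h.H.m_closed[OF h.H.m_closed[OF q] h.H.inv_closed[OF q]] by blast
    qed
    ultimately show "(\<lambda>y. q \<otimes>\<^bsub>Q' n\<^esub> y \<otimes>\<^bsub>Q' n\<^esub> inv\<^bsub>Q' n\<^esub> q) ` \<Gamma> \<in> F'" unfolding F'_def by blast
  qed
  moreover have "\<forall>L. subgroup L (G Mod N) \<longrightarrow> L \<times> {id} \<in> F'"
  proof (intro allI impI)
    fix L assume L: "subgroup L (G Mod N)"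
    have "L \<times> {id} \<subseteq> carrier (Q' n)" using subgroup.subset[OF L] idS by auto
    moreover have "pre n (L \<times> {id}) \<in> F"
      unfolding pre_L[OF L] using F(2) normal.factgroup_subgroup_union_subgroup[OF nrm L] by blast
    ultimately show "L \<times> {id} \<in> F'" unfolding F'_def by blast
  qed
  moreover have "universal_space (Q' n) F' (lev O' n) (act O' n)"
    unfolding universal_space_def
  proof (intro allI impI conjI)
    fix \<Gamma> assume G: "subgroup \<Gamma> (Q' n)"
    have U: "(pre n \<Gamma> \<in> F \<longrightarrow> contractible_nonempty (subtopology (lev Op n) (fixed_points (lev Op n) (act Op n) (pre n \<Gamma>)))) \<and>
          (pre n \<Gamma> \<notin> F \<longrightarrow> fixed_points (lev Op n) (act Op n) (pre n \<Gamma>) = {})"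
      using F(3) pre_subgroup[OF G] unfolding universal_space_def by blast
    have iff: "\<Gamma> \<in> F' \<longleftrightarrow> pre n \<Gamma> \<in> F" using subgroup.subset[OF G] F'_def by blast
    have sub: "fixed_points (lev Op n) (act Op n) (pre n \<Gamma>) \<subseteq> Fix n"
      using FP[OF G] top_O'[of n] unfolding fixed_points_def by blast
    have st: "subtopology (lev O' n) (fixed_points (lev O' n) (act O' n) \<Gamma>)
         = subtopology (lev Op n) (fixed_points (lev Op n) (act Op n) (pre n \<Gamma>))"
      unfolding FP[OF G] unfolding lev_O' subtopology_subtopology using sub by (simp add: Int_absorb1)
    show "\<Gamma> \<in> F' \<Longrightarrow> contractible_nonempty (subtopology (lev O' n) (fixed_points (lev O' n) (act O' n) \<Gamma>))"
      using U iff st by simp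
    show "\<Gamma> \<notin> F' \<Longrightarrow> fixed_points (lev O' n) (act O' n) \<Gamma> = {}"
      using U iff FP[OF G] by simp
  qed
  ultimately show ?thesis by (rule_tac x=F' in exI) blast
qed


lemmas P_oid = POs[THEN conjunct2, THEN conjunct2, THEN conjunct1]
lemmas P_oidfix = POs[THEN conjunct2, THEN conjunct2, THEN conjunct2, THEN conjunct1]
lemmas P_cont = POs[THEN conjunct2, THEN conjunct2, THEN conjunct2, THEN conjunct2, THEN conjunct1]
lemmas P_unit = POs[THEN conjunct2, THEN conjunct2, THEN conjunct2, THEN conjunct2, THEN conjunct2, THEN conjunct1]
lemmas P_assoc = POs[THEN conjunct2, THEN conjunct2, THEN conjunct2, THEN conjunct2, THEN conjunct2, THEN conjunct2, THEN conjunct1]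
lemmas P_Peq = POs[THEN conjunct2, THEN conjunct2, THEN conjunct2, THEN conjunct2, THEN conjunct2, THEN conjunct2, THEN conjunct2, THEN conjunct1]
lemmas P_Stop = POs[THEN conjunct2, THEN conjunct2, THEN conjunct2, THEN conjunct2, THEN conjunct2, THEN conjunct2, THEN conjunct2, THEN conjunct2, THEN conjunct1]
lemmas P_Sbot = POs[THEN conjunct2, THEN conjunct2, THEN conjunct2, THEN conjunct2, THEN conjunct2, THEN conjunct2, THEN conjunct2, THEN conjunct2, THEN conjunct2]

lemma PiE_Fix: "d \<in> (\<Pi>\<^sub>E i\<in>{1..k}. Fix (j i)) \<Longrightarrow> d \<in> (\<Pi>\<^sub>E i\<in>{1..k}. topspace (lev Op (j i)))"
  using Fix_sub by (auto simp: PiE_def Pi_def)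

lemma comp_top:
  assumes c: "c \<in> topspace (lev Op k)" and d: "d \<in> (\<Pi>\<^sub>E i\<in>{1..k}. topspace (lev Op (j i)))"
  shows "comp Op k j (c,d) \<in> topspace (lev Op (\<Sum>i\<in>{1..k}. j i))"
proof -
  have "(c,d) \<in> topspace (prod_topology (lev Op k) (product_topology (\<lambda>i. lev Op (j i)) {1..k}))"
    using c d by simp
  then show ?thesis using P_cont[rule_format, of k j] unfolding continuous_map_def by blast
qed

lemma comp_Fix:
  assumes c: "c \<in> Fix k" and d: "d \<in> (\<Pi>\<^sub>E i\<in>{1..k}. Fix (j i))"
  shows "comp Op k j (c,d) \<in> Fix (\<Sum>i\<in>{1..k}. j i)"
proof (rule FixI)
  have ct: "c \<in> topspace (lev Op k)" using c Fix_sub by blast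
  have dt: "d \<in> (\<Pi>\<^sub>E i\<in>{1..k}. topspace (lev Op (j i)))" using PiE_Fix[OF d] .
  show "comp Op k j (c,d) \<in> topspace (lev Op (\<Sum>i\<in>{1..k}. j i))" using comp_top[OF ct dt] .
  fix m assume m: "m \<in> N"
  have mG: "m \<in> carrier G" using m Nsub by blast
  have r: "restrict (\<lambda>i. act Op (j i) (m, id) (d i)) {1..k} = d"
  proof -
    have "restrict (\<lambda>i. act Op (j i) (m, id) (d i)) {1..k} = restrict d {1..k}"
      by (rule restrict_ext) (use PiE_mem[OF d] FixD[OF _ m] in blast)
    then show ?thesis using d by simp
  qed
  have "comp Op k j (act Op k (m, id) c, restrict (\<lambda>i. act Op (j i) (m, id) (d i)) {1..k}) =
      act Op (\<Sum>i\<in>{1..k}. j i) (m, id) (comp Op k j (c, d))"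
    using P_Peq mG ct dt by blast
  then show "act Op (\<Sum>i\<in>{1..k}. j i) (m, id) (comp Op k j (c, d)) = comp Op k j (c, d)"
    using r FixD[OF c m] by simp
qed

lemma sa_dir:
  "q \<in> carrier (Q n) \<Longrightarrow> q2 \<in> carrier (Q n) \<Longrightarrow> x \<in> topspace (lev Op n) \<Longrightarrow>
   act Op n (q \<otimes>\<^bsub>Q n\<^esub> q2) x = act Op n q (act Op n q2 x)"
  using sa[of n] unfolding space_action_def by blast

lemma Fix_closed': "x \<in> Fix n \<Longrightarrow> q \<in> carrier (Q n) \<Longrightarrow> act Op n q x \<in> Fix n"
  using Fix_closed by (cases q) auto

lemma sa_O': "space_action (Q' n) (lev O' n) (act O' n)"
  unfolding space_action_def top_O'
proof (intro conjI ballI)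
  interpret h: group_hom "Q n" "Q' n" pi by (rule pi_hom)
  fix q assume q: "q \<in> carrier (Q' n)"
  then obtain q' where q': "q' \<in> carrier (Q n)" "pi q' = q" using pi_surj by blast
  have c1: "continuous_map (lev O' n) (lev O' n) (act Op n q')"
    unfolding lev_O'
    apply (rule continuous_map_into_subtopology)
     apply (rule continuous_map_from_subtopology)
    using q' sa[of n] unfolding space_action_def apply blast
    using Fix_closed'[OF _ q'(1)] Fix_sub by auto
  show "continuous_map (lev O' n) (lev O' n) (act O' n q)"
    by (rule continuous_map_eq[OF c1]) (use act_pi q' top_O' in auto)
next
  fix x assume x: "x \<in> Fix n"
  show "act O' n \<one>\<^bsub>Q' n\<^esub> x = x"
    using key_one[OF x idS] act_one x Fix_sub by (auto simp: sym_group_one)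
next
  interpret h: group_hom "Q n" "Q' n" pi by (rule pi_hom)
  fix q1 q2 x assume q: "q1 \<in> carrier (Q' n)" "q2 \<in> carrier (Q' n)" and x: "x \<in> Fix n"
  obtain q1' where q1': "q1' \<in> carrier (Q n)" "pi q1' = q1" using pi_surj q(1) by blast
  obtain q2' where q2': "q2' \<in> carrier (Q n)" "pi q2' = q2" using pi_surj q(2) by blast
  have "q1 \<otimes>\<^bsub>Q' n\<^esub> q2 = pi (q1' \<otimes>\<^bsub>Q n\<^esub> q2')" using h.hom_mult q1' q2' by simp
  then have "act O' n (q1 \<otimes>\<^bsub>Q' n\<^esub> q2) x = act Op n (q1' \<otimes>\<^bsub>Q n\<^esub> q2') x"
    using act_pi[OF x h.G.m_closed[OF q1'(1) q2'(1)]] by simp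
  also have "\<dots> = act Op n q1' (act Op n q2' x)" using sa_dir q1' q2' x Fix_sub by blast
  also have "\<dots> = act O' n q1 (act O' n q2 x)"
    using act_pi[OF x q2'(1)] act_pi[OF Fix_closed'[OF x q2'(1)] q1'(1)] q1' q2' by simp
  finally show "act O' n (q1 \<otimes>\<^bsub>Q' n\<^esub> q2) x = act O' n q1 (act O' n q2 x)" .
qed


lemma rep_G: "C \<in> carrier (G Mod N) \<Longrightarrow> rep C \<in> carrier G" using rep_in by blast

lemma PO': "Pi_operad (G Mod N) O'"
  unfolding Pi_operad_def top_O' oid_O' comp_O' one_FactGroup
proof (intro conjI allI ballI impI)
  show "group (G Mod N)" using normal.factorgroup_is_group[OF nrm] .
  show "\<And>n. space_action (Q' n) (lev O' n) (act O' n)" by (rule sa_O')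
  show "oid Op \<in> Fix 1"
    by (rule FixI[OF P_oid]) (use P_oidfix[rule_format] Nsub in blast)
  show "\<And>g. g \<in> carrier (G Mod N) \<Longrightarrow> act O' 1 (g, id) (oid Op) = oid Op"
    unfolding act_O' using P_oidfix[rule_format, OF rep_G] by blast
next
  fix k and j :: "nat \<Rightarrow> nat"
  have eq: "prod_topology (lev O' k) (product_topology (\<lambda>i. lev O' (j i)) {1..k}) =
     subtopology (prod_topology (lev Op k) (product_topology (\<lambda>i. lev Op (j i)) {1..k}))
        (Fix k \<times> (\<Pi>\<^sub>E i\<in>{1..k}. Fix (j i)))"
    unfolding lev_O' subtopology_Times subtopology_product_topology ..
  show "continuous_map (prod_topology (lev O' k) (product_topology (\<lambda>i. lev O' (j i)) {1..k}))
          (lev O' (sum j {1..k})) (comp Op k j)"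
    unfolding eq
    apply (subst lev_O')
    apply (rule continuous_map_into_subtopology)
     apply (rule continuous_map_from_subtopology)
    apply (rule P_cont[rule_format])
    using comp_Fix by auto
next
  fix n x assume x: "x \<in> Fix n"
  then have "x \<in> topspace (lev Op n)" using Fix_sub by blast
  then show "comp Op 1 (\<lambda>_. n) (oid Op, \<lambda>_\<in>{1}. x) = x"
    "comp Op n (\<lambda>_. 1) (x, \<lambda>_\<in>{1..n}. oid Op) = x" using P_unit[rule_format] by blast+
next
  fix k j h c d e
  assume c: "c \<in> Fix k" and d: "d \<in> (\<Pi>\<^sub>E i\<in>{1..k}. Fix (j i))" and e: "e \<in> (\<Pi>\<^sub>E t\<in>{1..sum j {1..k}}. Fix (h t))"
  show "comp Op (sum j {1..k}) h (comp Op k j (c, d), e) =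
       comp Op k (\<lambda>i. \<Sum>l = 1..j i. h (blk j i + l))
        (c, \<lambda>i\<in>{1..k}. comp Op (j i) (\<lambda>l. h (blk j i + l)) (d i, \<lambda>l\<in>{1..j i}. e (blk j i + l)))"
    by (rule P_assoc[rule_format, OF _ PiE_Fix[OF d] PiE_Fix[OF e]]) (rule subsetD[OF Fix_sub c])
next
  fix k j g c d
  assume g: "g \<in> carrier (G Mod N)" and c: "c \<in> Fix k" and d: "d \<in> (\<Pi>\<^sub>E i\<in>{1..k}. Fix (j i))"
  show "comp Op k j (act O' k (g, id) c, \<lambda>i\<in>{1..k}. act O' (j i) (g, id) (d i)) =
       act O' (sum j {1..k}) (g, id) (comp Op k j (c, d))"
    unfolding act_O' by (rule P_Peq[rule_format, OF rep_G[OF g] _ PiE_Fix[OF d]]) (rule subsetD[OF Fix_sub c])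
next
  fix k j \<sigma> \<beta> c d
  assume s: "\<sigma> \<in> carrier (sym_group k)" and b: "\<beta> \<in> carrier (sym_group (sum j {1..k}))"
    and bl: "\<forall>i\<in>{1..k}. \<forall>l\<in>{1..j (\<sigma> i)}. \<beta> (blk (j \<circ> \<sigma>) i + l) = blk j (\<sigma> i) + l"
    and c: "c \<in> Fix k" and d: "d \<in> (\<Pi>\<^sub>E i\<in>{1..k}. Fix (j i))"
  have sp: "\<sigma> permutes {1..k}" using s sym_group_carrier by blast
  have d': "restrict (d \<circ> \<sigma>) {1..k} \<in> (\<Pi>\<^sub>E i\<in>{1..k}. Fix ((j \<circ> \<sigma>) i))"
    using d permutes_in_image[OF sp] by (auto simp: PiE_def Pi_def)
  have sj: "sum (j \<circ> \<sigma>) {1..k} = sum j {1..k}" using sum.permute[OF sp, of j] by simp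
  have cf: "comp Op k (j \<circ> \<sigma>) (c, restrict (d \<circ> \<sigma>) {1..k}) \<in> Fix (sum j {1..k})"
    using comp_Fix[OF c d'] sj by (simp del: comp_apply)
  show "comp Op k j (act O' k (N, \<sigma>) c, d) =
       act O' (sum j {1..k}) (N, \<beta>) (comp Op k (j \<circ> \<sigma>) (c, restrict (d \<circ> \<sigma>) {1..k}))"
    unfolding key_one[OF c s] key_one[OF cf b]
    by (rule P_Stop[rule_format, OF s b _ _ PiE_Fix[OF d]]) (use bl subsetD[OF Fix_sub c] in auto)
next
  fix k j \<tau> \<rho> c d
  assume t: "\<forall>i\<in>{1..k}. \<tau> i \<in> carrier (sym_group (j i))" and r: "\<rho> \<in> carrier (sym_group (sum j {1..k}))"
    and bl: "\<forall>i\<in>{1..k}. \<forall>l\<in>{1..j i}. \<rho> (blk j i + l) = blk j i + \<tau> i l"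
    and c: "c \<in> Fix k" and d: "d \<in> (\<Pi>\<^sub>E i\<in>{1..k}. Fix (j i))"
  have re: "restrict (\<lambda>i. act O' (j i) (N, \<tau> i) (d i)) {1..k} = restrict (\<lambda>i. act Op (j i) (\<one>, \<tau> i) (d i)) {1..k}"
    by (rule restrict_ext) (use key_one[OF PiE_mem[OF d]] t in blast)
  have cf: "comp Op k j (c, d) \<in> Fix (sum j {1..k})" using comp_Fix[OF c d] .
  show "comp Op k j (c, \<lambda>i\<in>{1..k}. act O' (j i) (N, \<tau> i) (d i)) =
       act O' (sum j {1..k}) (N, \<rho>) (comp Op k j (c, d))"
    unfolding re key_one[OF cf r]
    by (rule P_Sbot[rule_format, OF _ r _ _ PiE_Fix[OF d]]) (use t bl subsetD[OF Fix_sub c] in auto)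
qed


lemma EC': "equiv_contractible (G Mod N) (lev O' 0) (\<lambda>g. act O' 0 (g, id))"
proof -
  have EC: "equiv_contractible G (lev Op 0) (\<lambda>g. act Op 0 (g, id))"
    using NI unfolding N_infty_operad_def by blast
  then obtain x0 where x0: "x0 \<in> topspace (lev Op 0)" "\<And>g. g \<in> carrier G \<Longrightarrow> act Op 0 (g, id) x0 = x0"
    and hw: "homotopic_with (\<lambda>f. \<forall>g\<in>carrier G. \<forall>x\<in>topspace (lev Op 0). f (act Op 0 (g, id) x) = act Op 0 (g, id) (f x))
          (lev Op 0) (lev Op 0) id (\<lambda>x. x0)"
    unfolding equiv_contractible_def by blast
  obtain h where hc: "continuous_map (prod_topology (top_of_set {0..1::real}) (lev Op 0)) (lev Op 0) h"
    and h0: "\<And>x. h (0, x) = id x" and h1: "\<And>x. h (1, x) = x0"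
    and hP: "\<And>t. t \<in> {0..1} \<Longrightarrow> \<forall>g\<in>carrier G. \<forall>x\<in>topspace (lev Op 0). h (t, act Op 0 (g, id) x) = act Op 0 (g, id) (h (t, x))"
    using hw unfolding homotopic_with_def by blast
  have x0F: "x0 \<in> Fix 0" using x0 Nsub by (intro FixI) auto
  have hF: "h (t, x) \<in> Fix 0" if t: "t \<in> {0..1}" and x: "x \<in> Fix 0" for t x
  proof (rule FixI)
    have "(t, x) \<in> topspace (prod_topology (top_of_set {0..1::real}) (lev Op 0))"
      using t x Fix_sub by auto
    then show "h (t, x) \<in> topspace (lev Op 0)" using hc unfolding continuous_map_def by blast
    fix m assume m: "m \<in> N"
    have "act Op 0 (m, id) (h (t, x)) = h (t, act Op 0 (m, id) x)"
      using hP[OF t, rule_format, OF subsetD[OF Nsub m] subsetD[OF Fix_sub x]] by simp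
    then show "act Op 0 (m, id) (h (t, x)) = h (t, x)" using FixD[OF x m] by simp
  qed
  have hc': "continuous_map (prod_topology (top_of_set {0..1::real}) (lev O' 0)) (lev O' 0) h"
    unfolding lev_O' prod_topology_subtopology(2)
    apply (rule continuous_map_into_subtopology)
     apply (rule continuous_map_from_subtopology[OF hc])
    using hF by auto
  show ?thesis
    unfolding equiv_contractible_def homotopic_with_def
  proof (intro bexI[of _ x0] conjI exI[of _ h])
    show "x0 \<in> topspace (lev O' 0)" using x0F top_O' by simp
    show "\<forall>g\<in>carrier (G Mod N). act O' 0 (g, id) x0 = x0" unfolding act_O' using x0(2) rep_G by blast
    show "continuous_map (prod_topology (top_of_set {0..1::real}) (lev O' 0)) (lev O' 0) h" by (rule hc')
    show "\<forall>x. h (0, x) = id x" using h0 by blast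
    show "\<forall>x. h (1, x) = x0" using h1 by blast
    show "\<forall>t\<in>{0..1}. \<forall>g\<in>carrier (G Mod N). \<forall>x\<in>topspace (lev O' 0). h (t, act O' 0 (g, id) x) = act O' 0 (g, id) (h (t, x))"
    proof (intro ballI)
      fix t g x assume t: "t \<in> {0..1::real}" and g: "g \<in> carrier (G Mod N)" and x: "x \<in> topspace (lev O' 0)"
      show "h (t, act O' 0 (g, id) x) = act O' 0 (g, id) (h (t, x))"
        unfolding act_O' using hP[OF t, rule_format, OF rep_G[OF g]] x top_O' Fix_sub by blast
    qed
  qed
qed

lemma free': "\<sigma> \<in> carrier (sym_group n) \<Longrightarrow> x \<in> topspace (lev O' n) \<Longrightarrow>
          act O' n (\<one>\<^bsub>G Mod N\<^esub>, \<sigma>) x = x \<Longrightarrow> \<sigma> = id"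
proof -
  assume s: "\<sigma> \<in> carrier (sym_group n)" and x: "x \<in> topspace (lev O' n)" and e: "act O' n (\<one>\<^bsub>G Mod N\<^esub>, \<sigma>) x = x"
  have xF: "x \<in> Fix n" using x top_O' by simp
  have free: "\<forall>n. \<forall>\<sigma>\<in>carrier (sym_group n). \<forall>x\<in>topspace (lev Op n).
          act Op n (\<one>, \<sigma>) x = x \<longrightarrow> \<sigma> = id"
    using NI unfolding N_infty_operad_def by blast
  have "act Op n (\<one>, \<sigma>) x = x" using e key_one[OF xF s] by simp
  then show "\<sigma> = id" using free s xF Fix_sub by blast
qed

lemma NI': "N_infty_operad (G Mod N) O'"
  unfolding N_infty_operad_def
  using PO' EC' free' univ_part by blast


lemma adm:
  assumes H: "subgroup H G" and NH: "N \<subseteq> H" and fT: "finite T"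
    and sa: "set_action ((G Mod N)\<lparr>carrier := carrier ((G\<lparr>carrier := H\<rparr>) Mod N)\<rparr>) T a"
  shows "admissible (G Mod N) O' (carrier ((G\<lparr>carrier := H\<rparr>) Mod N)) T a
     \<longleftrightarrow> admissible G Op H T (\<lambda>h. a (N #> h))"
proof -
  define HN where "HN = carrier ((G\<lparr>carrier := H\<rparr>) Mod N)"
  have HN_eq: "HN = (\<lambda>h. N #> h) ` H" unfolding HN_def
    by (auto simp: FactGroup_def RCOSETS_def r_coset_def)
  have HG: "H \<subseteq> carrier G" using subgroup.subset[OF H] .
  have sa1: "\<And>C t. C \<in> HN \<Longrightarrow> t \<in> T \<Longrightarrow> a C t \<in> T"
    using sa unfolding set_action_def HN_def by auto
  have sa2: "\<And>t. t \<in> T \<Longrightarrow> a N t = t"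
    using sa unfolding set_action_def HN_def by auto
  have sa3: "\<And>C D t. C \<in> HN \<Longrightarrow> D \<in> HN \<Longrightarrow> t \<in> T \<Longrightarrow> a (C <#> D) t = a C (a D t)"
    using sa unfolding set_action_def HN_def by auto
  have bijC: "bij_betw (a C) T T" if C: "C \<in> HN" for C
  proof -
    obtain h where h: "h \<in> H" "C = N #> h" using C HN_eq by blast
    have hG: "h \<in> carrier G" using h HG by blast
    have ih: "inv h \<in> H" using subgroup.m_inv_closed[OF H h(1)] .
    define D where "D = N #> inv h"
    have D: "D \<in> HN" unfolding D_def HN_eq using ih by blast
    have DC: "D <#> C = N"
      unfolding D_def h(2) using normal.rcos_sum[OF nrm inv_closed[OF hG] hG] hG Nsub by simp
    have inj: "inj_on (a C) T"
    proof (rule inj_onI)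
      fix t1 t2 assume t: "t1 \<in> T" "t2 \<in> T" "a C t1 = a C t2"
      have "t1 = a (D <#> C) t1" using DC sa2 t by simp
      also have "\<dots> = a D (a C t1)" using sa3 D C t by blast
      also have "\<dots> = a D (a C t2)" using t by simp
      also have "\<dots> = a (D <#> C) t2" using sa3 D C t by simp
      also have "\<dots> = t2" using DC sa2 t by simp
      finally show "t1 = t2" .
    qed
    have "a C ` T = T" using endo_inj_surj[OF fT _ inj] sa1[OF C] by blast
    then show ?thesis using inj unfolding bij_betw_def by blast
  qed
  define c where "c = card T"
  define sig where "sig e C = (\<lambda>m. if m \<in> {1..c} then e (a C (inv_into T e m)) else m)" for e :: "'b \<Rightarrow> nat" and C
  have perm: "sig e C \<in> carrier (sym_group c)" if eb: "bij_betw e T {1..c}" and C: "C \<in> HN" for e C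
  proof -
    have "bij_betw (e \<circ> (a C \<circ> inv_into T e)) {1..c} {1..c}"
      using bij_betw_trans[OF bij_betw_trans[OF bij_betw_inv_into[OF eb] bijC[OF C]] eb] .
    then have "bij_betw (sig e C) {1..c} {1..c}"
      by (rule bij_betw_cong[THEN iffD1, rotated]) (simp add: sig_def)
    then have "sig e C permutes {1..c}" by (rule bij_imp_permutes) (auto simp: sig_def)
    then show ?thesis by (simp add: sym_group_carrier)
  qed
  have sigN: "sig e N = id" if eb: "bij_betw e T {1..c}" for e
  proof
    fix m
    show "sig e N m = id m"
    proof (cases "m \<in> {1..c}")
      case True
      then have m: "m \<in> e ` T" using eb bij_betw_imp_surj_on by blast
      have "inv_into T e m \<in> T" using inv_into_into[OF m] .
      then show ?thesis using True sa2 f_inv_into_f[OF m] by (simp add: sig_def)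
    qed (auto simp: sig_def)
  qed
  have FPeq: "fixed_points (lev O' c) (act O' c) (graph_of_Lset HN T a e) =
              fixed_points (lev Op c) (act Op c) (graph_of_Lset H T (\<lambda>h. a (N #> h)) e)"
    if eb: "bij_betw e T {1..c}" for e
  proof -
    have GL: "graph_of_Lset HN T a e = (\<lambda>C. (C, sig e C)) ` HN"
      unfolding graph_of_Lset_def sig_def c_def by auto
    have GR: "graph_of_Lset H T (\<lambda>h. a (N #> h)) e = (\<lambda>h. (h, sig e (N #> h))) ` H"
      unfolding graph_of_Lset_def sig_def c_def by auto
    show ?thesis
      unfolding GL GR
    proof
      show "fixed_points (lev O' c) (act O' c) ((\<lambda>C. (C, sig e C)) ` HN)
        \<subseteq> fixed_points (lev Op c) (act Op c) ((\<lambda>h. (h, sig e (N #> h))) ` H)"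
      proof
        fix x assume "x \<in> fixed_points (lev O' c) (act O' c) ((\<lambda>C. (C, sig e C)) ` HN)"
        then have x: "x \<in> Fix c" "\<And>C. C \<in> HN \<Longrightarrow> act O' c (C, sig e C) x = x"
          unfolding fixed_points_def top_O' by auto
        have "act Op c (h, sig e (N #> h)) x = x" if h: "h \<in> H" for h
        proof -
          have NhH: "N #> h \<in> HN" using h HN_eq by blast
          have "act Op c (h, sig e (N #> h)) x = act O' c (N #> h, sig e (N #> h)) x"
            using key'[OF x(1) subsetD[OF HG h] perm[OF eb NhH]] by simp
          then show ?thesis using x(2)[OF NhH] by simp
        qed
        then show "x \<in> fixed_points (lev Op c) (act Op c) ((\<lambda>h. (h, sig e (N #> h))) ` H)"
          unfolding fixed_points_def using x(1) Fix_sub by auto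
      qed
      show "fixed_points (lev Op c) (act Op c) ((\<lambda>h. (h, sig e (N #> h))) ` H)
        \<subseteq> fixed_points (lev O' c) (act O' c) ((\<lambda>C. (C, sig e C)) ` HN)"
      proof
        fix x assume "x \<in> fixed_points (lev Op c) (act Op c) ((\<lambda>h. (h, sig e (N #> h))) ` H)"
        then have x: "x \<in> topspace (lev Op c)" "\<And>h. h \<in> H \<Longrightarrow> act Op c (h, sig e (N #> h)) x = x"
          unfolding fixed_points_def by auto
        have xF: "x \<in> Fix c"
        proof (rule FixI[OF x(1)])
          fix m assume m: "m \<in> N"
          have "N #> m = N" using coset_join2[OF subsetD[OF Nsub m] Nsg m] .
          then show "act Op c (m, id) x = x" using x(2)[of m] m NH sigN[OF eb] by auto
        qed
        have "act O' c (C, sig e C) x = x" if C: "C \<in> HN" for C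
        proof -
          obtain h where h: "h \<in> H" "C = N #> h" using C HN_eq by blast
          have "act O' c (C, sig e C) x = act Op c (h, sig e C) x"
            unfolding h(2) using key'[OF xF subsetD[OF HG h(1)] perm[OF eb C[unfolded h(2)]]] .
          then show ?thesis using x(2)[OF h(1)] h(2) by simp
        qed
        then show "x \<in> fixed_points (lev O' c) (act O' c) ((\<lambda>C. (C, sig e C)) ` HN)"
          unfolding fixed_points_def top_O' using xF by auto
      qed
    qed
  qed
  show ?thesis
    unfolding admissible_def HN_def[symmetric] c_def[symmetric]
    using FPeq by metis
qed

end

theorem mainTheorem20:
  fixes G :: "'g monoid" and N :: "'g set" and Op :: "('g, 'x) operad"
  assumes "group G" and "finite (carrier G)" and "N \<lhd> G"
    and "N_infty_operad G Op"
  shows "N_infty_operad (G Mod N) (fixed_operad G N Op) \<and>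
         (\<forall>H (T :: 't set) a. subgroup H G \<longrightarrow> N \<subseteq> H \<longrightarrow> finite T \<longrightarrow>
           set_action ((G Mod N)\<lparr>carrier := carrier ((G\<lparr>carrier := H\<rparr>) Mod N)\<rparr>) T a \<longrightarrow>
           (admissible (G Mod N) (fixed_operad G N Op) (carrier ((G\<lparr>carrier := H\<rparr>) Mod N)) T a
            \<longleftrightarrow> admissible G Op H T (\<lambda>h. a (N #>\<^bsub>G\<^esub> h))))"
proof -
  interpret f: fxs G N Op
    unfolding fxs_def fxs_axioms_def using assms by blast
  show ?thesis using f.NI' f.adm by blast
qed

end
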